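(* Let $\mathcal{G}=(\mathcal{A},\phi)$ be a $\mathrm{PLTL}_{\mathbf{G}}$ game with $\mathrm{var}(\phi)\neq\emptyset$. For $y\in\mathrm{var}(\phi)$ let $\phi_y$ be the formula obtained from $\phi$ by inductively replacing every subformula $\mathbf{G}_{\le z}\psi$ with $z\neq y$ by $\psi$, and let $\mathcal{G}_y=(\mathcal{A},\phi_y)$. Then $\mathcal{W}^0_{\mathcal{G}}$ is infinite if and only if there exists $y\in\mathrm{var}(\phi)$ such that $\mathcal{W}^0_{\mathcal{G}_y}$ contains every valuation $\{y\}\to\mathbb{N}$ (or $\mathrm{var}(\phi_y)=\emptyset$ and Player 0 wins $\mathcal{G}_y$). Moreover, if $\phi$ is a PLTL formula containing at least one operator $\mathbf{F}_{\le x}$, then $\mathcal{W}^0_{(\mathcal{A},\phi)}$ is infinite if and only if it is non-empty.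
   Context: PLTL formulae over atomic propositions $P$ and disjoint variable sets $\mathcal{X},\mathcal{Y}$: $\phi::= p\mid\neg p\mid\phi\wedge\phi\mid\phi\vee\phi\mid\mathbf{X}\phi\mid\phi\mathbf{U}\phi\mid\phi\mathbf{R}\phi\mid\mathbf{F}_{\le x}\phi\mid\mathbf{G}_{\le y}\phi$ ($x\in\mathcal{X}$, $y\in\mathcal{Y}$), with LTL semantics for unparameterized operators and, w.r.t. $\alpha\colon\mathcal{X}\cup\mathcal{Y}\to\mathbb{N}$: $\mathbf{F}_{\le x}\phi$ holds at $i$ iff $\phi$ holds at some $i+j$, $0\le j\le\alpha(x)$; $\mathbf{G}_{\le y}\phi$ holds at $i$ iff $\phi$ holds at all $i+j$, $0\le j\le\alpha(y)$. $\phi$ is $\mathrm{PLTL}_{\mathbf{G}}$ if $\mathrm{var}(\phi)\subseteq\mathcal{Y}$. In the game $(\mathcal{A},\phi)$ on a finite arena $\mathcal{A}=(V,V_0,V_1,E,v_0,\ell)$, Player 0 wins a play $\rho$ w.r.t. $\alpha$ iff $(\ell(\rho_0)\ell(\rho_1)\cdots,0,\alpha)\models\phi$. $\mathcal{W}^0_{\mathcal{G}}$ is the set of valuations $\alpha\colon\mathrm{var}(\phi)\to\mathbb{N}$ for which Player 0 has a strategy winning every consistent play w.r.t. $\alpha$. *)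

theory Defs
  imports Main
begin

text \<open>Atomic propositions of type 'p, parameter variables: 'x for F-variables (set X),
 'y for G-variables (set Y); distinct types make X and Y disjoint.\<close>

datatype ('p, 'x, 'y) pltl =
    Prop 'p
  | NProp 'p
  | And "('p,'x,'y) pltl" "('p,'x,'y) pltl"
  | Or "('p,'x,'y) pltl" "('p,'x,'y) pltl"
  | Next "('p,'x,'y) pltl"
  | Until "('p,'x,'y) pltl" "('p,'x,'y) pltl"
  | Release "('p,'x,'y) pltl" "('p,'x,'y) pltl"
  | Fle 'x "('p,'x,'y) pltl"
  | Gle 'y "('p,'x,'y) pltl"

fun var :: "('p,'x,'y) pltl \<Rightarrow> ('x + 'y) set" where
  "var (Prop p) = {}"
| "var (NProp p) = {}"
| "var (And a b) = var a \<union> var b"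
| "var (Or a b) = var a \<union> var b"
| "var (Next a) = var a"
| "var (Until a b) = var a \<union> var b"
| "var (Release a b) = var a \<union> var b"
| "var (Fle x a) = insert (Inl x) (var a)"
| "var (Gle y a) = insert (Inr y) (var a)"

definition is_PLTL_G :: "('p,'x,'y) pltl \<Rightarrow> bool" where
  "is_PLTL_G \<phi> \<longleftrightarrow> var \<phi> \<subseteq> range Inr"

fun restrictG :: "'y \<Rightarrow> ('p,'x,'y) pltl \<Rightarrow> ('p,'x,'y) pltl" where
  "restrictG y (Prop p) = Prop p"
| "restrictG y (NProp p) = NProp p"
| "restrictG y (And a b) = And (restrictG y a) (restrictG y b)"
| "restrictG y (Or a b) = Or (restrictG y a) (restrictG y b)"
| "restrictG y (Next a) = Next (restrictG y a)"
| "restrictG y (Until a b) = Until (restrictG y a) (restrictG y b)"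
| "restrictG y (Release a b) = Release (restrictG y a) (restrictG y b)"
| "restrictG y (Fle x a) = Fle x (restrictG y a)"
| "restrictG y (Gle z a) = (if z = y then Gle z (restrictG y a) else restrictG y a)"

fun sat :: "(nat \<Rightarrow> 'p set) \<Rightarrow> nat \<Rightarrow> ('x + 'y \<Rightarrow> nat) \<Rightarrow> ('p,'x,'y) pltl \<Rightarrow> bool" where
  "sat w i \<alpha> (Prop p) = (p \<in> w i)"
| "sat w i \<alpha> (NProp p) = (p \<notin> w i)"
| "sat w i \<alpha> (And a b) = (sat w i \<alpha> a \<and> sat w i \<alpha> b)"
| "sat w i \<alpha> (Or a b) = (sat w i \<alpha> a \<or> sat w i \<alpha> b)"
| "sat w i \<alpha> (Next a) = sat w (Suc i) \<alpha> a"
| "sat w i \<alpha> (Until a b) = (\<exists>k\<ge>i. sat w k \<alpha> b \<and> (\<forall>j. i \<le> j \<and> j < k \<longrightarrow> sat w j \<alpha> a))"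
| "sat w i \<alpha> (Release a b) = (\<forall>k\<ge>i. sat w k \<alpha> b \<or> (\<exists>j. i \<le> j \<and> j < k \<and> sat w j \<alpha> a))"
| "sat w i \<alpha> (Fle x a) = (\<exists>j\<le>\<alpha> (Inl x). sat w (i + j) \<alpha> a)"
| "sat w i \<alpha> (Gle y a) = (\<forall>j\<le>\<alpha> (Inr y). sat w (i + j) \<alpha> a)"

record ('v, 'p) arena =
  arV :: "'v set"
  arV0 :: "'v set"
  arV1 :: "'v set"
  arE :: "('v \<times> 'v) set"
  arInit :: "'v"
  arLab :: "'v \<Rightarrow> 'p set"

definition is_arena :: "('v,'p) arena \<Rightarrow> bool" where
  "is_arena A \<longleftrightarrow> finite (arV A) \<and> arV0 A \<union> arV1 A = arV A \<and> arV0 A \<inter> arV1 A = {}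
     \<and> arE A \<subseteq> arV A \<times> arV A \<and> (\<forall>v\<in>arV A. \<exists>v'. (v, v') \<in> arE A) \<and> arInit A \<in> arV A"

definition is_play :: "('v,'p) arena \<Rightarrow> (nat \<Rightarrow> 'v) \<Rightarrow> bool" where
  "is_play A \<rho> \<longleftrightarrow> \<rho> 0 = arInit A \<and> (\<forall>n. (\<rho> n, \<rho> (Suc n)) \<in> arE A)"

definition is_strategy0 :: "('v,'p) arena \<Rightarrow> ('v list \<Rightarrow> 'v) \<Rightarrow> bool" where
  "is_strategy0 A \<sigma> \<longleftrightarrow> (\<forall>h. h \<noteq> [] \<and> set h \<subseteq> arV A \<and> last h \<in> arV0 A \<longrightarrow> (last h, \<sigma> h) \<in> arE A)"

definition consistent :: "('v,'p) arena \<Rightarrow> ('v list \<Rightarrow> 'v) \<Rightarrow> (nat \<Rightarrow> 'v) \<Rightarrow> bool" where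
  "consistent A \<sigma> \<rho> \<longleftrightarrow> (\<forall>n. \<rho> n \<in> arV0 A \<longrightarrow> \<rho> (Suc n) = \<sigma> (map \<rho> [0..<Suc n]))"

definition wins0 :: "('v,'p) arena \<Rightarrow> ('p,'x,'y) pltl \<Rightarrow> ('x + 'y \<Rightarrow> nat) \<Rightarrow> (nat \<Rightarrow> 'v) \<Rightarrow> bool" where
  "wins0 A \<phi> \<alpha> \<rho> \<longleftrightarrow> sat (\<lambda>n. arLab A (\<rho> n)) 0 \<alpha> \<phi>"

text \<open>Valuations var(phi) -> N, represented extensionally (value 0 outside var(phi)).\<close>
definition valuations :: "('x + 'y) set \<Rightarrow> ('x + 'y \<Rightarrow> nat) set" where
  "valuations S = {\<alpha>. \<forall>v. v \<notin> S \<longrightarrow> \<alpha> v = 0}"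

definition W0 :: "('v,'p) arena \<Rightarrow> ('p,'x,'y) pltl \<Rightarrow> ('x + 'y \<Rightarrow> nat) set" where
  "W0 A \<phi> = {\<alpha> \<in> valuations (var \<phi>). \<exists>\<sigma>. is_strategy0 A \<sigma> \<and>
       (\<forall>\<rho>. is_play A \<rho> \<and> consistent A \<sigma> \<rho> \<longrightarrow> wins0 A \<phi> \<alpha> \<rho>)}"

end

theory Submission
  imports Defs
begin

lemma sat_mono:
  assumes "\<And>x. \<alpha> (Inl x) \<le> \<beta> (Inl x)" "\<And>y. \<beta> (Inr y) \<le> \<alpha> (Inr y)"
  shows "sat w i \<alpha> \<phi> \<Longrightarrow> sat w i \<beta> \<phi>"
proof (induction \<phi> arbitrary: i)
  case (Fle x a)
  then show ?case using assms(1)[of x] by (auto intro: order_trans)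
next
  case (Gle y a)
  then show ?case using assms(2)[of y] by auto
qed force+

lemma sat_restrictG:
  assumes "\<And>z. z \<noteq> y \<Longrightarrow> \<beta> (Inr z) = 0" "\<beta> (Inr y) = \<alpha> (Inr y)"
    "\<And>x. \<beta> (Inl x) = \<alpha> (Inl x)"
  shows "sat w i \<beta> \<phi> = sat w i \<alpha> (restrictG y \<phi>)"
proof (induction \<phi> arbitrary: i)
  case (Fle x a)
  then show ?case using assms(3)[of x] by auto
next
  case (Gle z a)
  then show ?case using assms(1)[of z] assms(2) by auto
qed auto

lemma finite_var: "finite (var \<phi>)"
  by (induction \<phi>) auto

lemma var_restrictG_G: "is_PLTL_G \<phi> \<Longrightarrow> var (restrictG y \<phi>) \<subseteq> {Inr y}"
  by (induction \<phi>) (auto simp: is_PLTL_G_def)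

lemma var_restrictG_y: "Inr y \<in> var \<phi> \<Longrightarrow> Inr y \<in> var (restrictG y \<phi>)"
  by (induction \<phi>) auto

lemma infinite_coord:
  assumes "finite S" "W \<subseteq> valuations S" "infinite W"
  shows "\<exists>v\<in>S. infinite ((\<lambda>\<alpha>. \<alpha> v) ` W)"
proof (rule ccontr)
  assume "\<not> ?thesis"
  then have fin: "finite (\<Union>v\<in>S. (\<lambda>\<alpha>. \<alpha> v) ` W)" using assms(1) by auto
  have "W \<subseteq> {f. \<forall>x. (x \<in> S \<longrightarrow> f x \<in> (\<Union>v\<in>S. (\<lambda>\<alpha>. \<alpha> v) ` W)) \<and> (x \<notin> S \<longrightarrow> f x = 0)}"
    using assms(2) by (auto simp: valuations_def)
  moreover have "finite {f. \<forall>x. (x \<in> S \<longrightarrow> f x \<in> (\<Union>v\<in>S. (\<lambda>\<alpha>. \<alpha> v) ` W)) \<and> (x \<notin> S \<longrightarrow> f x = (0::nat))}"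
    by (rule finite_set_of_finite_funs[OF assms(1) fin])
  ultimately show False using assms(3) finite_subset by blast
qed

theorem mainTheorem5:
  fixes A :: "('v, 'p) arena" and \<phi> \<chi> :: "('p, 'x, 'y) pltl"
  assumes "is_arena A"
  shows "(is_PLTL_G \<phi> \<and> var \<phi> \<noteq> {} \<longrightarrow>
           (infinite (W0 A \<phi>) \<longleftrightarrow>
             (\<exists>y. Inr y \<in> var \<phi> \<and>
                 (valuations {Inr y} \<subseteq> W0 A (restrictG y \<phi>)
                  \<or> (var (restrictG y \<phi>) = {} \<and> W0 A (restrictG y \<phi>) \<noteq> {})))))
       \<and> ((\<exists>x. Inl x \<in> var \<chi>) \<longrightarrow> (infinite (W0 A \<chi>) \<longleftrightarrow> W0 A \<chi> \<noteq> {}))"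
proof (intro conjI impI)
  assume "\<exists>x. Inl x \<in> var \<chi>"
  then obtain x where x: "Inl x \<in> var \<chi>" by blast
  show "infinite (W0 A \<chi>) \<longleftrightarrow> W0 A \<chi> \<noteq> {}"
  proof
    assume "infinite (W0 A \<chi>)" then show "W0 A \<chi> \<noteq> {}" by auto
  next
    assume "W0 A \<chi> \<noteq> {}"
    then obtain \<alpha> where a: "\<alpha> \<in> W0 A \<chi>" by blast
    let ?f = "\<lambda>n. \<alpha>(Inl x := \<alpha> (Inl x) + n)"
    have "?f n \<in> W0 A \<chi>" for n
    proof -
      from a obtain \<sigma> where s: "is_strategy0 A \<sigma>"
        "\<forall>\<rho>. is_play A \<rho> \<and> consistent A \<sigma> \<rho> \<longrightarrow> wins0 A \<chi> \<alpha> \<rho>"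
        and v: "\<alpha> \<in> valuations (var \<chi>)" by (auto simp: W0_def)
      have "wins0 A \<chi> (?f n) \<rho>" if "wins0 A \<chi> \<alpha> \<rho>" for \<rho>
      proof -
        have "\<And>z. \<alpha> (Inl z) \<le> ?f n (Inl z)" by simp
        moreover have "\<And>z. ?f n (Inr z) \<le> \<alpha> (Inr z)" by simp
        ultimately show ?thesis using sat_mono[where \<alpha>=\<alpha> and \<beta>="?f n"] that
          unfolding wins0_def by blast
      qed
      moreover have "?f n \<in> valuations (var \<chi>)" using v x by (auto simp: valuations_def)
      ultimately show ?thesis using s by (auto simp: W0_def)
    qed
    moreover have "inj ?f"
      by (rule injI) (metis add_left_cancel fun_upd_same)
    ultimately show "infinite (W0 A \<chi>)"
      by (meson image_subsetI finite_imageD finite_subset infinite_UNIV_nat inj_on_subset subset_UNIV)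
  qed
next
  assume h: "is_PLTL_G \<phi> \<and> var \<phi> \<noteq> {}"
  then have G: "is_PLTL_G \<phi>" by blast
  show "infinite (W0 A \<phi>) \<longleftrightarrow>
             (\<exists>y. Inr y \<in> var \<phi> \<and>
                 (valuations {Inr y} \<subseteq> W0 A (restrictG y \<phi>)
                  \<or> (var (restrictG y \<phi>) = {} \<and> W0 A (restrictG y \<phi>) \<noteq> {})))"
  proof
    assume inf: "infinite (W0 A \<phi>)"
    have "W0 A \<phi> \<subseteq> valuations (var \<phi>)" by (auto simp: W0_def)
    from infinite_coord[OF finite_var this inf] obtain v where
      v: "v \<in> var \<phi>" "infinite ((\<lambda>\<alpha>. \<alpha> v) ` W0 A \<phi>)" by blast
    then obtain y where y: "v = Inr y" using G by (auto simp: is_PLTL_G_def)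
    have "valuations {Inr y} \<subseteq> W0 A (restrictG y \<phi>)"
    proof
      fix \<beta> :: "'x + 'y \<Rightarrow> nat" assume b: "\<beta> \<in> valuations {Inr y}"
      from v(2) have "\<not> (\<forall>m\<in>(\<lambda>\<alpha>. \<alpha> v) ` W0 A \<phi>. m \<le> \<beta> (Inr y))"
        using finite_nat_set_iff_bounded_le by blast
      then obtain m where "m \<in> (\<lambda>\<alpha>. \<alpha> v) ` W0 A \<phi>" "\<beta> (Inr y) \<le> m"
        by (meson nle_le)
      then obtain \<alpha> where a: "\<alpha> \<in> W0 A \<phi>" "\<beta> (Inr y) \<le> \<alpha> (Inr y)" using y by auto
      from a obtain \<sigma> where s: "is_strategy0 A \<sigma>"
        "\<forall>\<rho>. is_play A \<rho> \<and> consistent A \<sigma> \<rho> \<longrightarrow> wins0 A \<phi> \<alpha> \<rho>"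
        by (auto simp: W0_def)
      have "wins0 A (restrictG y \<phi>) \<beta> \<rho>" if "wins0 A \<phi> \<alpha> \<rho>" for \<rho>
      proof -
        have "sat (\<lambda>n. arLab A (\<rho> n)) 0 \<beta> \<phi>"
          using that unfolding wins0_def
          by (intro sat_mono[of \<alpha> \<beta>]) (use b a G in \<open>auto simp: valuations_def W0_def is_PLTL_G_def\<close>)
        then show ?thesis unfolding wins0_def
          by (subst sat_restrictG[symmetric]) (use b in \<open>auto simp: valuations_def\<close>)
      qed
      moreover have "\<beta> \<in> valuations (var (restrictG y \<phi>))"
      proof -
        have "var (restrictG y \<phi>) = {Inr y}"
          using var_restrictG_G[OF G, of y] var_restrictG_y[of y \<phi>] v y by blast
        then show ?thesis using b by simp
      qed
      ultimately show "\<beta> \<in> W0 A (restrictG y \<phi>)" using s by (auto simp: W0_def)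
    qed
    then show "\<exists>y. Inr y \<in> var \<phi> \<and>
                 (valuations {Inr y} \<subseteq> W0 A (restrictG y \<phi>)
                  \<or> (var (restrictG y \<phi>) = {} \<and> W0 A (restrictG y \<phi>) \<noteq> {}))"
      using v y by blast
  next
    assume "\<exists>y. Inr y \<in> var \<phi> \<and>
                 (valuations {Inr y} \<subseteq> W0 A (restrictG y \<phi>)
                  \<or> (var (restrictG y \<phi>) = {} \<and> W0 A (restrictG y \<phi>) \<noteq> {}))"
    then obtain y where y: "Inr y \<in> var \<phi>" and
      c: "valuations {Inr y} \<subseteq> W0 A (restrictG y \<phi>)
                  \<or> (var (restrictG y \<phi>) = {} \<and> W0 A (restrictG y \<phi>) \<noteq> {})" by blast
    let ?f = "\<lambda>n::nat. (\<lambda>v. if v = Inr y then n else 0) :: 'x + 'y \<Rightarrow> nat"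
    have mem: "?f n \<in> W0 A \<phi>" if "?f n \<in> W0 A (restrictG y \<phi>)" for n
    proof -
      from that obtain \<sigma> where s: "is_strategy0 A \<sigma>"
        "\<forall>\<rho>. is_play A \<rho> \<and> consistent A \<sigma> \<rho> \<longrightarrow> wins0 A (restrictG y \<phi>) (?f n) \<rho>"
        by (auto simp: W0_def)
      have "wins0 A \<phi> (?f n) \<rho>" if "wins0 A (restrictG y \<phi>) (?f n) \<rho>" for \<rho>
        using that unfolding wins0_def by (subst sat_restrictG) auto
      moreover have "?f n \<in> valuations (var \<phi>)" using y by (auto simp: valuations_def)
      ultimately show ?thesis using s by (auto simp: W0_def)
    qed
    have "?f n \<in> W0 A \<phi>" for n
    proof -
      have "var (restrictG y \<phi>) \<noteq> {}"
      proof
        assume e: "var (restrictG y \<phi>) = {}"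
        have "Inr y \<in> var (restrictG y \<phi>)" using y by (rule var_restrictG_y)
        then show False using e by blast
      qed
      then have "valuations {Inr y} \<subseteq> W0 A (restrictG y \<phi>)" using c by blast
      moreover have "?f n \<in> valuations {Inr y}" by (auto simp: valuations_def)
      ultimately show ?thesis using mem by blast
    qed
    moreover have "inj ?f"
      by (rule injI) (metis (full_types))
    ultimately show "infinite (W0 A \<phi>)"
      by (meson image_subsetI finite_imageD finite_subset infinite_UNIV_nat inj_on_subset subset_UNIV)
  qed
qed

end
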